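(* For $k\in\mathbb{N}\cup\{0\}$ let $W_k,Z_k$ be Banach spaces such that (i) $Z_k$ is compactly embedded in $W_k$, and (ii) for each $\varepsilon>0$, $\kappa_\varepsilon=\sup_{k\ge0}\mathcal{N}_\varepsilon(B_{Z_k},W_k)<\infty$. Let $\mathcal{B}_k\subset W_k$ be sets and $U^k:\mathcal{B}_k\to\mathcal{B}_{k-1}$ ($k\ge1$) maps such that (iii) each $\mathcal{B}_k$ is compact in $W_k$; (iv) $\sup_{k\ge0}\|\mathcal{B}_k\|_{W_k}=Q_1<\infty$; (v) $U^k(\mathcal{B}_k)=\mathcal{B}_{k-1}$; (vi) there is a decomposition $U^k(z)=P^k(z)+N^k(z)$ and constants $0<\varrho<\frac14$, $Q_2>0$ such that for all $z^1,z^2\in\mathcal{B}_k$, $$\|P^k(z^1)-P^k(z^2)\|_{W_{k-1}}\le\varrho\|z^1-z^2\|_{W_k},\qquad \|N^k(z^1)-N^k(z^2)\|_{Z_{k-1}}\le Q_2\|z^1-z^2\|_{W_k}.$$ Then $$\dim_{W_0}\mathcal{B}_0\le\frac{\log_2\kappa_{\varrho Q_2^{-1}}}{\log_2\frac{1}{4\varrho}}.$$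
   Context: For a Banach space $W$, $B_W$ denotes its closed unit ball and $B_W(\varepsilon,x)=x+\varepsilon B_W$. For $K\subset W$ (relatively) compact, $\mathcal{N}_\varepsilon(K,W)$ is the minimal number of $\varepsilon$-balls of $W$ covering $K$; here $B_{Z_k}$ is regarded as a subset of $W_k$. The fractal dimension of a compact $K\subset W$ is $\dim_WK=\limsup_{\varepsilon\to0^+}\frac{\log\mathcal{N}_\varepsilon(K,W)}{\log(1/\varepsilon)}$. $\|D\|_W=\sup_{z\in D}\|z\|_W$. In (vi), $P^k,N^k$ map $\mathcal{B}_k$ into $W_{k-1}$, and the differences $N^k(z^1)-N^k(z^2)$ lie in $Z_{k-1}$. *)

theory Defs
  imports "HOL-Analysis.Analysis"
begin

text \<open>A family of Banach spaces of possibly different kinds is modelled as a family of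
  linear subspaces of one ambient real vector space, each carrying its own norm function.\<close>

definition normed_subspace :: "'a::real_vector set \<Rightarrow> ('a \<Rightarrow> real) \<Rightarrow> bool" where
  "normed_subspace V n \<longleftrightarrow> subspace V \<and> (\<forall>x\<in>V. 0 \<le> n x) \<and> (\<forall>x\<in>V. n x = 0 \<longleftrightarrow> x = 0)
     \<and> (\<forall>x\<in>V. \<forall>c. n (c *\<^sub>R x) = \<bar>c\<bar> * n x) \<and> (\<forall>x\<in>V. \<forall>y\<in>V. n (x + y) \<le> n x + n y)"

definition conv_in :: "'a::real_vector set \<Rightarrow> ('a \<Rightarrow> real) \<Rightarrow> (nat \<Rightarrow> 'a) \<Rightarrow> 'a \<Rightarrow> bool" where
  "conv_in V n x l \<longleftrightarrow> l \<in> V \<and> (\<forall>e>0. \<exists>M. \<forall>m\<ge>M. n (x m - l) < e)"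

definition banach_space :: "'a::real_vector set \<Rightarrow> ('a \<Rightarrow> real) \<Rightarrow> bool" where
  "banach_space V n \<longleftrightarrow> normed_subspace V n \<and>
     (\<forall>x::nat \<Rightarrow> 'a. (\<forall>m. x m \<in> V) \<and> (\<forall>e>0. \<exists>M. \<forall>m\<ge>M. \<forall>p\<ge>M. n (x m - x p) < e) \<longrightarrow> (\<exists>l. conv_in V n x l))"

definition ns_compact :: "'a::real_vector set \<Rightarrow> ('a \<Rightarrow> real) \<Rightarrow> 'a set \<Rightarrow> bool" where
  "ns_compact V n K \<longleftrightarrow> K \<subseteq> V \<and>
     (\<forall>x::nat \<Rightarrow> 'a. (\<forall>m. x m \<in> K) \<longrightarrow> (\<exists>r l. strict_mono r \<and> l \<in> K \<and> conv_in V n (x \<circ> r) l))"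

definition ns_rel_compact :: "'a::real_vector set \<Rightarrow> ('a \<Rightarrow> real) \<Rightarrow> 'a set \<Rightarrow> bool" where
  "ns_rel_compact V n K \<longleftrightarrow> K \<subseteq> V \<and>
     (\<forall>x::nat \<Rightarrow> 'a. (\<forall>m. x m \<in> K) \<longrightarrow> (\<exists>r l. strict_mono r \<and> conv_in V n (x \<circ> r) l))"

definition compactly_embedded ::
  "'a::real_vector set \<Rightarrow> ('a \<Rightarrow> real) \<Rightarrow> 'a set \<Rightarrow> ('a \<Rightarrow> real) \<Rightarrow> bool" where
  "compactly_embedded Z nZ W nW \<longleftrightarrow> Z \<subseteq> W \<and> (\<exists>C. \<forall>z\<in>Z. nW z \<le> C * nZ z)
     \<and> ns_rel_compact W nW {z\<in>Z. nZ z \<le> 1}"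

definition unit_ball :: "'a::real_vector set \<Rightarrow> ('a \<Rightarrow> real) \<Rightarrow> 'a set" where
  "unit_ball V n = {x\<in>V. n x \<le> 1}"

definition covering_number :: "'a::real_vector set \<Rightarrow> ('a \<Rightarrow> real) \<Rightarrow> real \<Rightarrow> 'a set \<Rightarrow> nat" where
  "covering_number V n eps K =
     Inf {card C | C. finite C \<and> C \<subseteq> V \<and> K \<subseteq> (\<Union>c\<in>C. {x\<in>V. n (x - c) \<le> eps})}"

definition set_norm :: "('a \<Rightarrow> real) \<Rightarrow> 'a set \<Rightarrow> real" where
  "set_norm n D = (SUP z\<in>D. n z)"

definition fractal_dim :: "'a::real_vector set \<Rightarrow> ('a \<Rightarrow> real) \<Rightarrow> 'a set \<Rightarrow> ereal" where
  "fractal_dim V n K =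
     Limsup (at_right 0) (\<lambda>e. ereal (ln (real (covering_number V n e K)) / ln (1 / e)))"

end

theory Submission
  imports Defs
begin

lemma ns_sub: "normed_subspace V n \<Longrightarrow> subspace V" by (simp add: normed_subspace_def)

lemma ns_scale: "normed_subspace V n \<Longrightarrow> x \<in> V \<Longrightarrow> n (c *\<^sub>R x) = \<bar>c\<bar> * n x"
  by (simp add: normed_subspace_def)

lemma ns_nonneg: "normed_subspace V n \<Longrightarrow> x \<in> V \<Longrightarrow> 0 \<le> n x"
  by (simp add: normed_subspace_def)

lemma ns_zero: "normed_subspace V n \<Longrightarrow> n 0 = 0"
  using subspace_0[of V] by (simp add: normed_subspace_def)

lemma ns_add: "normed_subspace V n \<Longrightarrow> x \<in> V \<Longrightarrow> y \<in> V \<Longrightarrow> n (x + y) \<le> n x + n y"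
  by (simp add: normed_subspace_def)

lemma ns_sym: assumes "normed_subspace V n" "x \<in> V" "y \<in> V" shows "n (x - y) = n (y - x)"
proof -
  have "x - y \<in> V" using assms subspace_diff ns_sub by blast
  then have "n ((-1) *\<^sub>R (x - y)) = n (x - y)" using ns_scale[OF assms(1), of "x - y" "-1"] by simp
  moreover have "(-1) *\<^sub>R (x - y) = y - x" by simp
  ultimately show ?thesis by simp
qed

lemma ns_tri: assumes "normed_subspace V n" "x \<in> V" "y \<in> V" "z \<in> V"
  shows "n (x - z) \<le> n (x - y) + n (y - z)"
proof -
  have "x - y \<in> V" "y - z \<in> V" using assms subspace_diff ns_sub by blast+
  then have "n ((x - y) + (y - z)) \<le> n (x - y) + n (y - z)" using ns_add[OF assms(1)] by blast
  then show ?thesis by simp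
qed

lemma tb:
  assumes ns: "normed_subspace V n" and rc: "ns_rel_compact V n K" and e: "e > 0"
  shows "\<exists>C. finite C \<and> C \<subseteq> K \<and> K \<subseteq> (\<Union>c\<in>C. {x\<in>V. n (x - c) \<le> e})"
proof -
  define d where "d x y = (if x \<in> V \<and> y \<in> V then n (x - y) else 0)" for x y
  interpret M: Metric_space V d
  proof
    show "0 \<le> d x y" for x y using ns_nonneg[OF ns] subspace_diff[OF ns_sub[OF ns]] by (simp add: d_def)
    show "d x y = d y x" for x y using ns_sym[OF ns] by (simp add: d_def)
    show "d x y = 0 \<longleftrightarrow> x = y" if "x \<in> V" "y \<in> V" for x y
      using that ns subspace_diff[OF ns_sub[OF ns]] by (auto simp: d_def normed_subspace_def)
    show "d x z \<le> d x y + d y z" if "x \<in> V" "y \<in> V" "z \<in> V" for x y z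
      using that ns_tri[OF ns] by (simp add: d_def)
  qed
  have KV: "K \<subseteq> V" using rc by (simp add: ns_rel_compact_def)
  have "M.mtotally_bounded K"
    unfolding M.mtotally_bounded_sequentially
  proof (intro conjI allI impI)
    show "K \<subseteq> V" by (rule KV)
    fix \<sigma> :: "nat \<Rightarrow> 'a" assume "range \<sigma> \<subseteq> K"
    then obtain r l where r: "strict_mono r" and cv: "conv_in V n (\<sigma> \<circ> r) l"
      using rc unfolding ns_rel_compact_def by blast
    have sV: "\<sigma> m \<in> V" for m using \<open>range \<sigma> \<subseteq> K\<close> KV by auto
    have lV: "l \<in> V" using cv by (simp add: conv_in_def)
    have "M.MCauchy (\<sigma> \<circ> r)"
      unfolding M.MCauchy_def
    proof (intro conjI allI impI)
      show "range (\<sigma> \<circ> r) \<subseteq> V" using sV by auto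
      fix \<epsilon> :: real assume "\<epsilon> > 0"
      then obtain N where N: "\<And>m. m \<ge> N \<Longrightarrow> n ((\<sigma> \<circ> r) m - l) < \<epsilon>/2"
        using cv unfolding conv_in_def by (meson half_gt_zero)
      show "\<exists>N. \<forall>m m'. N \<le> m \<longrightarrow> N \<le> m' \<longrightarrow> d ((\<sigma> \<circ> r) m) ((\<sigma> \<circ> r) m') < \<epsilon>"
      proof (intro exI allI impI)
        fix m m' assume "N \<le> m" "N \<le> m'"
        have "n (\<sigma> (r m) - \<sigma> (r m')) \<le> n (\<sigma> (r m) - l) + n (l - \<sigma> (r m'))"
          using ns_tri[OF ns sV lV sV] .
        also have "n (l - \<sigma> (r m')) = n (\<sigma> (r m') - l)" using ns_sym[OF ns lV sV] .
        finally show "d ((\<sigma> \<circ> r) m) ((\<sigma> \<circ> r) m') < \<epsilon>"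
          using N[OF \<open>N \<le> m\<close>] N[OF \<open>N \<le> m'\<close>] sV by (simp add: d_def)
      qed
    qed
    then show "\<exists>r. strict_mono r \<and> M.MCauchy (\<sigma> \<circ> r)" using r by blast
  qed
  then have tbK: "\<forall>\<epsilon>>0. \<exists>C. finite C \<and> C \<subseteq> K \<and> K \<subseteq> (\<Union>x\<in>C. M.mball x \<epsilon>)"
    unfolding M.mtotally_bounded_def .
  obtain C where C: "finite C" "C \<subseteq> K" "K \<subseteq> (\<Union>x\<in>C. M.mball x e)"
    using tbK[rule_format, OF e] by (elim exE conjE) simp
  have "K \<subseteq> (\<Union>c\<in>C. {x\<in>V. n (x - c) \<le> e})"
  proof
    fix y assume "y \<in> K"
    then obtain x where "x \<in> C" "y \<in> M.mball x e" using C by blast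
    then have xy: "x \<in> V" "y \<in> V" "n (x - y) < e" by (auto simp: d_def)
    then have "n (y - x) \<le> e" using ns_sym[OF ns xy(1) xy(2)] by simp
    then show "y \<in> (\<Union>c\<in>C. {x\<in>V. n (x - c) \<le> e})"
      using \<open>x \<in> C\<close> xy(2) by blast
  qed
  then show ?thesis using C by blast
qed

lemma cov_le:
  assumes "finite C" "C \<subseteq> V" "K \<subseteq> (\<Union>c\<in>C. {x\<in>V. n (x - c) \<le> e})"
  shows "covering_number V n e K \<le> card C"
  unfolding covering_number_def using assms by (intro cInf_lower) auto

lemma cov_attained:
  assumes "finite C" "C \<subseteq> V" "K \<subseteq> (\<Union>c\<in>C. {x\<in>V. n (x - c) \<le> e})"
  shows "\<exists>D. finite D \<and> D \<subseteq> V \<and> K \<subseteq> (\<Union>c\<in>D. {x\<in>V. n (x - c) \<le> e}) \<and> card D = covering_number V n e K"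
proof -
  let ?S = "{card C | C. finite C \<and> C \<subseteq> V \<and> K \<subseteq> (\<Union>c\<in>C. {x\<in>V. n (x - c) \<le> e})}"
  have "?S \<noteq> {}" using assms by blast
  then have "Inf ?S \<in> ?S" by (rule Inf_nat_def1)
  then show ?thesis unfolding covering_number_def by auto
qed


lemma limsup_bound:
  fixes f :: "real \<Rightarrow> real" and Lr :: real
  assumes key: "\<And>e. 0 < e \<Longrightarrow> e < 1 \<Longrightarrow> f e / ln (1/e) \<le> Lr + c0 / ln (1/e)"
  and c0pos: "c0 \<ge> 0"
  shows "Limsup (at_right 0) (\<lambda>e. ereal (f e / ln (1 / e))) \<le> ereal Lr"
  unfolding Limsup_le_iff
proof (intro allI impI)
    fix y :: ereal assume y: "ereal Lr < y"
    show "\<forall>\<^sub>F x in at_right 0. y > ereal (f x / ln (1 / x))"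
    proof (cases y)
      case (real y')
      then have dl: "y' - Lr > 0" using y by simp
      define b where "b = min 1 (exp (- (c0 / (y' - Lr))))"
      have b0: "b > 0" by (simp add: b_def)
      show ?thesis unfolding real eventually_at_right_field
      proof (intro exI[of _ b] conjI allI impI)
        show "0 < b" by (rule b0)
        fix x :: real assume x: "0 < x" "x < b"
        then have x1: "x < 1" by (simp add: b_def)
        have "x < exp (- (c0 / (y' - Lr)))" using x by (simp add: b_def)
        then have "ln x < ln (exp (- (c0 / (y' - Lr))))" using x by (subst ln_less_cancel_iff) auto
        then have "ln x < - (c0 / (y' - Lr))" by simp
        then have tt: "ln (1/x) > c0 / (y' - Lr)" using x by (simp add: ln_div)
        have t0: "ln (1/x) > 0" using x x1 by simp
        have "c0 < (y' - Lr) * ln (1/x)" using tt dl by (simp add: field_simps)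
        then have "c0 / ln (1/x) < y' - Lr" using t0 by (simp add: field_simps)
        then show "ereal (f x / ln (1 / x)) < ereal y'"
          using key[OF x(1) x1] by simp
      qed
    next
      case PInf then show ?thesis by simp
    next
      case MInf then show ?thesis using y by simp
    qed
qed

theorem lemma6p2:
  fixes W Z B :: "nat \<Rightarrow> 'a::real_vector set"
    and nW nZ :: "nat \<Rightarrow> 'a \<Rightarrow> real"
    and U P N :: "nat \<Rightarrow> 'a \<Rightarrow> 'a"
    and \<rho> Q2 :: real
  assumes W_banach: "\<And>k. banach_space (W k) (nW k)"
    and Z_banach: "\<And>k. banach_space (Z k) (nZ k)"
    and emb: "\<And>k. compactly_embedded (Z k) (nZ k) (W k) (nW k)"
    and kappa_fin: "\<And>\<epsilon>. \<epsilon> > 0 \<Longrightarrow>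
        bdd_above (range (\<lambda>k. covering_number (W k) (nW k) \<epsilon> (unit_ball (Z k) (nZ k))))"
    and B_compact: "\<And>k. ns_compact (W k) (nW k) (B k)"
    and B_bounded: "\<exists>Q1. (\<forall>k. B k \<noteq> {} \<longrightarrow> set_norm (nW k) (B k) \<le> Q1) \<and>
                        (\<forall>k. bdd_above (nW k ` B k))"
    and U_maps: "\<And>k. k \<ge> 1 \<Longrightarrow> U k ` B k = B (k - 1)"
    and P_maps: "\<And>k z. k \<ge> 1 \<Longrightarrow> z \<in> B k \<Longrightarrow> P k z \<in> W (k - 1)"
    and N_maps: "\<And>k z. k \<ge> 1 \<Longrightarrow> z \<in> B k \<Longrightarrow> N k z \<in> W (k - 1)"
    and decomp: "\<And>k z. k \<ge> 1 \<Longrightarrow> z \<in> B k \<Longrightarrow> U k z = P k z + N k z"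
    and rho: "0 < \<rho>" "\<rho> < 1/4"
    and Q2: "Q2 > 0"
    and P_lip: "\<And>k z1 z2. k \<ge> 1 \<Longrightarrow> z1 \<in> B k \<Longrightarrow> z2 \<in> B k \<Longrightarrow>
        nW (k - 1) (P k z1 - P k z2) \<le> \<rho> * nW k (z1 - z2)"
    and N_diff: "\<And>k z1 z2. k \<ge> 1 \<Longrightarrow> z1 \<in> B k \<Longrightarrow> z2 \<in> B k \<Longrightarrow>
        N k z1 - N k z2 \<in> Z (k - 1)"
    and N_lip: "\<And>k z1 z2. k \<ge> 1 \<Longrightarrow> z1 \<in> B k \<Longrightarrow> z2 \<in> B k \<Longrightarrow>
        nZ (k - 1) (N k z1 - N k z2) \<le> Q2 * nW k (z1 - z2)"
  shows "fractal_dim (W 0) (nW 0) (B 0) \<le>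
    ereal (log 2 (real (SUP k. covering_number (W k) (nW k) (\<rho> / Q2) (unit_ball (Z k) (nZ k))))
           / log 2 (1 / (4 * \<rho>)))"
proof -
  have nsW: "\<And>k. normed_subspace (W k) (nW k)" using W_banach by (simp add: banach_space_def)
  have nsZ: "\<And>k. normed_subspace (Z k) (nZ k)" using Z_banach by (simp add: banach_space_def)
  have ZW: "\<And>k. Z k \<subseteq> W k" using emb by (simp add: compactly_embedded_def)
  have BW: "\<And>k. B k \<subseteq> W k" using B_compact by (simp add: ns_compact_def)
  obtain Q1 where Q1: "\<And>k. B k \<noteq> {} \<Longrightarrow> set_norm (nW k) (B k) \<le> Q1" "\<And>k. bdd_above (nW k ` B k)"
    using B_bounded by blast
  have bnd: "nW k z \<le> Q1" if "z \<in> B k" for k z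
  proof -
    have "nW k z \<le> set_norm (nW k) (B k)" unfolding set_norm_def
      using that Q1(2) by (intro cSUP_upper) auto
    also have "\<dots> \<le> Q1" using Q1(1) that by blast
    finally show ?thesis .
  qed
  define R where "R = max (2*Q1) 1"
  define \<theta> where "\<theta> = 4*\<rho>"
  have R1: "R \<ge> 1" by (simp add: R_def)
  have th: "0 < \<theta>" "\<theta> < 1" using rho by (auto simp: \<theta>_def)
  define cv where "cv k = covering_number (W k) (nW k) (\<rho>/Q2) (unit_ball (Z k) (nZ k))" for k
  define \<kappa> where "\<kappa> = (SUP k. cv k)"
  have eps: "\<rho>/Q2 > 0" using rho Q2 by simp
  have cvk: "cv k \<le> \<kappa>" for k
    unfolding \<kappa>_def cv_def using kappa_fin[OF eps] by (intro cSUP_upper) auto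
  have Dex: "\<exists>D. finite D \<and> D \<subseteq> W k \<and> unit_ball (Z k) (nZ k) \<subseteq> (\<Union>c\<in>D. {x\<in>W k. nW k (x-c) \<le> \<rho>/Q2}) \<and> card D \<le> \<kappa>" for k
  proof -
    have "ns_rel_compact (W k) (nW k) (unit_ball (Z k) (nZ k))"
      using emb[of k] by (simp add: compactly_embedded_def unit_ball_def)
    from tb[OF nsW this eps] obtain C where C: "finite C" "C \<subseteq> unit_ball (Z k) (nZ k)"
      "unit_ball (Z k) (nZ k) \<subseteq> (\<Union>c\<in>C. {x\<in>W k. nW k (x - c) \<le> \<rho>/Q2})" by blast
    have "C \<subseteq> W k" using C(2) ZW[of k] by (auto simp: unit_ball_def)
    from cov_attained[OF C(1) this C(3)] obtain D where "finite D" "D \<subseteq> W k"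
      "unit_ball (Z k) (nZ k) \<subseteq> (\<Union>c\<in>D. {x\<in>W k. nW k (x - c) \<le> \<rho>/Q2})" "card D = cv k"
      unfolding cv_def by blast
    then show ?thesis using cvk[of k] by auto
  qed
  then have "\<forall>k. \<exists>D. finite D \<and> D \<subseteq> W k \<and> unit_ball (Z k) (nZ k) \<subseteq> (\<Union>c\<in>D. {x\<in>W k. nW k (x-c) \<le> \<rho>/Q2}) \<and> card D \<le> \<kappa>" by blast
  from choice[OF this] obtain D where Dall: "\<forall>k. finite (D k) \<and> D k \<subseteq> W k \<and> unit_ball (Z k) (nZ k) \<subseteq> (\<Union>c\<in>D k. {x\<in>W k. nW k (x-c) \<le> \<rho>/Q2}) \<and> card (D k) \<le> \<kappa>" by blast
  have D: "\<And>k. finite (D k)" "\<And>k. D k \<subseteq> W k"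
    "\<And>k. unit_ball (Z k) (nZ k) \<subseteq> (\<Union>c\<in>D k. {x\<in>W k. nW k (x-c) \<le> \<rho>/Q2})" "\<And>k. card (D k) \<le> \<kappa>"
    using Dall by auto
  have k1: "1 \<le> \<kappa>"
  proof -
    have "0 \<in> unit_ball (Z 0) (nZ 0)"
      using subspace_0[OF ns_sub[OF nsZ]] ns_zero[OF nsZ] by (simp add: unit_ball_def)
    then have "D 0 \<noteq> {}" using D(3)[of 0] by blast
    then have "1 \<le> card (D 0)" using D(1)[of 0] by (simp add: Suc_le_eq card_gt_0_iff)
    then show ?thesis using D(4)[of 0] by simp
  qed
  have S: "\<forall>k. \<exists>C. finite C \<and> C \<subseteq> B k \<and> card C \<le> \<kappa>^m \<and> B k \<subseteq> (\<Union>c\<in>C. {x\<in>W k. nW k (x-c) \<le> R*\<theta>^m})" for m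
  proof (induct m)
    case 0
    show ?case
    proof
      fix k
      show "\<exists>C. finite C \<and> C \<subseteq> B k \<and> card C \<le> \<kappa>^0 \<and> B k \<subseteq> (\<Union>c\<in>C. {x\<in>W k. nW k (x-c) \<le> R*\<theta>^0})"
      proof (cases "B k = {}")
        case True then show ?thesis by (intro exI[of _ "{}"]) auto
      next
        case False
        then obtain c where c: "c \<in> B k" by blast
        have "B k \<subseteq> {x\<in>W k. nW k (x-c) \<le> R}"
        proof
          fix x assume x: "x \<in> B k"
          have xW: "x \<in> W k" and cW: "c \<in> W k" using x c BW by auto
          have "nW k (x - c) \<le> nW k (x - 0) + nW k (0 - c)"
            using ns_tri[OF nsW xW subspace_0[OF ns_sub[OF nsW]] cW] .
          also have "nW k (0 - c) = nW k (c - 0)"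
            using ns_sym[OF nsW subspace_0[OF ns_sub[OF nsW]] cW] .
          finally have "nW k (x - c) \<le> nW k x + nW k c" by simp
          also have "\<dots> \<le> R" using bnd[OF x] bnd[OF c] by (simp add: R_def)
          finally show "x \<in> {x\<in>W k. nW k (x-c) \<le> R}" using xW by simp
        qed
        then show ?thesis using c by (intro exI[of _ "{c}"]) simp
      qed
    qed
  next
    case (Suc m)
    show ?case
    proof
      fix k
      obtain C where C: "finite C" "C \<subseteq> B (Suc k)" "card C \<le> \<kappa>^m"
        "B (Suc k) \<subseteq> (\<Union>c\<in>C. {x\<in>W (Suc k). nW (Suc k) (x-c) \<le> R*\<theta>^m})"
        using spec[OF Suc, of "Suc k"] by (elim exE conjE) simp
      define r where "r = R*\<theta>^m"
      have r0: "r > 0" using R1 th by (simp add: r_def)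
      define f where "f = (\<lambda>(c,d). U (Suc k) c + (Q2*r) *\<^sub>R d)"
      define E where "E = f ` (C \<times> D k)"
      define good where "good e \<longleftrightarrow> (\<exists>y\<in>B k. nW k (y - e) \<le> 2*\<rho>*r)" for e
      define g where "g e = (SOME y. y \<in> B k \<and> nW k (y - e) \<le> 2*\<rho>*r)" for e
      define C' where "C' = g ` {e\<in>E. good e}"
      have gprop: "g e \<in> B k \<and> nW k (g e - e) \<le> 2*\<rho>*r" if "good e" for e
        unfolding g_def by (rule someI_ex) (use that good_def in blast)
      have finE: "finite E" using C(1) D(1) by (simp add: E_def)
      have fin: "finite C'" using finE by (simp add: C'_def)
      have sub: "C' \<subseteq> B k" using gprop by (auto simp: C'_def)
      have "card C' \<le> card {e\<in>E. good e}" unfolding C'_def by (rule card_image_le) (use finE in simp)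
      also have "\<dots> \<le> card E" using finE by (intro card_mono) auto
      also have "\<dots> \<le> card (C \<times> D k)" unfolding E_def by (rule card_image_le) (use C(1) D(1) in simp)
      also have "\<dots> = card C * card (D k)" by (rule card_cartesian_product)
      also have "\<dots> \<le> \<kappa>^m * \<kappa>" using C(3) D(4)[of k] by (intro mult_mono) auto
      finally have card: "card C' \<le> \<kappa>^Suc m" by (simp add: mult.commute)
      have cover: "B k \<subseteq> (\<Union>c\<in>C'. {x\<in>W k. nW k (x-c) \<le> R*\<theta>^Suc m})"
      proof
        fix x assume x: "x \<in> B k"
        have xW: "x \<in> W k" using x BW by auto
        have "U (Suc k) ` B (Suc k) = B k" using U_maps[of "Suc k"] by simp
        then obtain z where z: "z \<in> B (Suc k)" and xz: "x = U (Suc k) z" using x by auto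
        obtain c where c: "c \<in> C" and zc: "nW (Suc k) (z - c) \<le> r"
          using C(4) z by (auto simp: r_def)
        have cB: "c \<in> B (Suc k)" using c C(2) by auto
        define w where "w = N (Suc k) z - N (Suc k) c"
        have wZ: "w \<in> Z k" using N_diff[of "Suc k" z c] z cB by (simp add: w_def)
        have nw: "nZ k w \<le> Q2 * r"
        proof -
          have "nZ k w \<le> Q2 * nW (Suc k) (z - c)" using N_lip[of "Suc k" z c] z cB by (simp add: w_def)
          also have "\<dots> \<le> Q2 * r" using zc Q2 by (intro mult_left_mono) auto
          finally show ?thesis .
        qed
        define v where "v = (1/(Q2*r)) *\<^sub>R w"
        have vZ: "v \<in> Z k" unfolding v_def by (rule subspace_scale[OF ns_sub[OF nsZ] wZ])
        have "nZ k v = (1/(Q2*r)) * nZ k w" unfolding v_def using ns_scale[OF nsZ wZ] Q2 r0 by simp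
        also have "\<dots> \<le> 1" using nw Q2 r0 by (simp add: field_simps)
        finally have "v \<in> unit_ball (Z k) (nZ k)" using vZ by (simp add: unit_ball_def)
        then obtain d where d: "d \<in> D k" and vd: "nW k (v - d) \<le> \<rho>/Q2" using D(3)[of k] by blast
        have dW: "d \<in> W k" using d D(2) by auto
        have vW: "v \<in> W k" using vZ ZW by auto
        have sW: "subspace (W k)" by (rule ns_sub[OF nsW])
        have PzW: "P (Suc k) z \<in> W k" and PcW: "P (Suc k) c \<in> W k"
          and NcW: "N (Suc k) c \<in> W k"
          using P_maps[of "Suc k" z] P_maps[of "Suc k" c] N_maps[of "Suc k" c] z cB by auto
        define e where "e = f (c, d)"
        have eE: "e \<in> E" using c d by (auto simp: E_def e_def)
        have eW: "e \<in> W k" unfolding e_def f_def using decomp[of "Suc k" c] cB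
          by (simp add: subspace_add[OF sW] subspace_scale[OF sW] PcW NcW dW)
        have wv: "(Q2*r) *\<^sub>R v = w" using Q2 r0 by (simp add: v_def)
        have eq: "x - e = (P (Suc k) z - P (Suc k) c) + (Q2*r) *\<^sub>R (v - d)"
          unfolding e_def f_def xz using decomp[of "Suc k" z] decomp[of "Suc k" c] z cB wv
          by (simp add: scaleR_diff_right w_def algebra_simps)
        have d1: "P (Suc k) z - P (Suc k) c \<in> W k" by (rule subspace_diff[OF sW PzW PcW])
        have d2: "(Q2*r) *\<^sub>R (v - d) \<in> W k" by (rule subspace_scale[OF sW subspace_diff[OF sW vW dW]])
        have "nW k (x - e) \<le> nW k (P (Suc k) z - P (Suc k) c) + nW k ((Q2*r) *\<^sub>R (v - d))"
          unfolding eq by (rule ns_add[OF nsW d1 d2])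
        also have "nW k (P (Suc k) z - P (Suc k) c) \<le> \<rho> * r"
        proof -
          have "nW k (P (Suc k) z - P (Suc k) c) \<le> \<rho> * nW (Suc k) (z - c)"
            using P_lip[of "Suc k" z c] z cB by simp
          also have "\<dots> \<le> \<rho> * r" using zc rho by (intro mult_left_mono) auto
          finally show ?thesis .
        qed
        also have "nW k ((Q2*r) *\<^sub>R (v - d)) \<le> \<rho> * r"
        proof -
          have "nW k ((Q2*r) *\<^sub>R (v - d)) = (Q2*r) * nW k (v - d)"
            using ns_scale[OF nsW subspace_diff[OF sW vW dW]] Q2 r0 by simp
          also have "\<dots> \<le> (Q2*r) * (\<rho>/Q2)" using vd Q2 r0 by (intro mult_left_mono) auto
          also have "\<dots> = \<rho> * r" using Q2 by simp
          finally show ?thesis .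
        qed
        finally have xe: "nW k (x - e) \<le> 2*\<rho>*r" by simp
        have ge: "good e" using x xe good_def by blast
        have geB: "g e \<in> B k" and gee: "nW k (g e - e) \<le> 2*\<rho>*r" using gprop[OF ge] by auto
        have geW: "g e \<in> W k" using geB BW by auto
        have "nW k (x - g e) \<le> nW k (x - e) + nW k (e - g e)" by (rule ns_tri[OF nsW xW eW geW])
        also have "nW k (e - g e) = nW k (g e - e)" by (rule ns_sym[OF nsW eW geW])
        finally have "nW k (x - g e) \<le> 4*\<rho>*r" using xe gee by linarith
        also have "4*\<rho>*r = R*\<theta>^Suc m" unfolding r_def \<theta>_def by (simp add: algebra_simps)
        finally have "nW k (x - g e) \<le> R*\<theta>^Suc m" .
        moreover have "g e \<in> C'" using eE ge by (auto simp: C'_def)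
        ultimately show "x \<in> (\<Union>c\<in>C'. {x\<in>W k. nW k (x-c) \<le> R*\<theta>^Suc m})" using xW by blast
      qed
      show "\<exists>C. finite C \<and> C \<subseteq> B k \<and> card C \<le> \<kappa>^Suc m \<and> B k \<subseteq> (\<Union>c\<in>C. {x\<in>W k. nW k (x-c) \<le> R*\<theta>^Suc m})"
        using fin sub card cover by blast
    qed
  qed
  have a0: "ln (1/\<theta>) > 0" using th by simp
  define a where "a = ln (1/\<theta>)"
  define Lr where "Lr = ln (real \<kappa>) / a"
  define c0 where "c0 = ln (real \<kappa>) * (ln R / a + 1)"
  have kpos: "real \<kappa> \<ge> 1" using k1 by simp
  have c0pos: "c0 \<ge> 0" unfolding c0_def a_def using kpos R1 a0
    by (intro mult_nonneg_nonneg add_nonneg_nonneg divide_nonneg_pos) auto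
  have key: "ln (real (covering_number (W 0) (nW 0) e (B 0))) / ln (1/e) \<le> Lr + c0 / ln (1/e)"
    if e: "0 < e" "e < 1" for e
  proof -
    define t where "t = ln (1/e)"
    have t0: "t > 0" using e by (simp add: t_def)
    define n where "n = nat \<lceil>(ln R + t)/a\<rceil>"
    have q0: "(ln R + t)/a \<ge> 0" using R1 t0 a0 by (simp add: a_def)
    have nge: "real n \<ge> (ln R + t)/a" unfolding n_def using q0 by linarith
    have nle: "real n \<le> (ln R + t)/a + 1" unfolding n_def using q0 by linarith
    have lnth: "ln \<theta> = - a" using th by (simp add: a_def ln_div)
    have "\<theta>^n = exp (real n * ln \<theta>)" using th by (simp add: exp_of_nat_mult)
    also have "\<dots> \<le> exp (ln (e/R))"
    proof -
      have "real n * a \<ge> ln R + t" using nge a0 by (simp add: a_def field_simps)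
      moreover have "ln (e/R) = - t - ln R" using e R1 by (simp add: t_def ln_div)
      ultimately show ?thesis unfolding lnth by simp
    qed
    also have "\<dots> = e/R" using e R1 by simp
    finally have "R * \<theta>^n \<le> e" using R1 by (simp add: field_simps)
    obtain C where C: "finite C" "C \<subseteq> B 0" "card C \<le> \<kappa>^n"
      "B 0 \<subseteq> (\<Union>c\<in>C. {x\<in>W 0. nW 0 (x-c) \<le> R*\<theta>^n})"
      using spec[OF S[of n], of 0] by (elim exE conjE) simp
    have cov0: "B 0 \<subseteq> (\<Union>c\<in>C. {x\<in>W 0. nW 0 (x-c) \<le> e})"
    proof
      fix x assume "x \<in> B 0"
      then obtain c where "c \<in> C" "x \<in> W 0" "nW 0 (x-c) \<le> R*\<theta>^n" using C(4) by blast
      then show "x \<in> (\<Union>c\<in>C. {x\<in>W 0. nW 0 (x-c) \<le> e})" using \<open>R * \<theta>^n \<le> e\<close> by force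
    qed
    have CW0: "C \<subseteq> W 0" using C(2) BW by auto
    have "covering_number (W 0) (nW 0) e (B 0) \<le> card C" by (rule cov_le[OF C(1) CW0 cov0])
    then have cle: "covering_number (W 0) (nW 0) e (B 0) \<le> \<kappa>^n" using C(3) by linarith
    have lnle: "ln (real (covering_number (W 0) (nW 0) e (B 0))) \<le> real n * ln (real \<kappa>)"
    proof (cases "covering_number (W 0) (nW 0) e (B 0) = 0")
      case True then show ?thesis using kpos by simp
    next
      case False
      then have "ln (real (covering_number (W 0) (nW 0) e (B 0))) \<le> ln (real (\<kappa>^n))"
        using cle k1 by (subst ln_le_cancel_iff) auto
      also have "\<dots> = real n * ln (real \<kappa>)" using kpos by (simp add: ln_realpow)
      finally show ?thesis .
    qed
    have "ln (real (covering_number (W 0) (nW 0) e (B 0))) / t \<le> real n * ln (real \<kappa>) / t"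
      using lnle t0 by (simp add: divide_right_mono)
    also have "\<dots> \<le> ((ln R + t)/a + 1) * ln (real \<kappa>) / t"
      using nle t0 kpos by (intro divide_right_mono mult_right_mono) auto
    also have "\<dots> = Lr + c0 / t" unfolding Lr_def c0_def using t0 a0 by (simp add: a_def field_simps)
    finally show ?thesis by (simp add: t_def)
  qed
  have kap: "(SUP k. covering_number (W k) (nW k) (\<rho> / Q2) (unit_ball (Z k) (nZ k))) = \<kappa>"
    by (simp add: \<kappa>_def cv_def)
  have rhs: "log 2 (real (SUP k. covering_number (W k) (nW k) (\<rho> / Q2) (unit_ball (Z k) (nZ k))))
           / log 2 (1 / (4 * \<rho>)) = Lr"
    unfolding kap by (simp add: log_def Lr_def a_def \<theta>_def)
  show ?thesis
    unfolding fractal_dim_def rhs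
    by (rule limsup_bound[where f="\<lambda>e. ln (real (covering_number (W 0) (nW 0) e (B 0)))", OF key c0pos])
qed

end
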